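(* For every $\Gamma\cup\{\varphi\}\subseteq{\bf F}(\Sigma,\mathcal{V})$: $\Gamma\vdash_{C_1}\varphi$ iff $\Gamma\vDash^{\mathsf{RN}}_{\mathcal{RM}_{C_1}}\varphi$.
   Context: $\Sigma$ has unary $\neg$ and binary $\wedge,\vee,\to$; ${\bf F}(\Sigma,\mathcal{V})$ its formulas over a denumerable set $\mathcal{V}$ of variables. Abbreviations: $\alpha^0=\alpha$, $\alpha^{k+1}=\neg(\alpha^k\wedge\neg\alpha^k)$; $\alpha^{(1)}=\alpha^1$, $\alpha^{(k+1)}=\alpha^{(k)}\wedge\alpha^{k+1}$. For $n\ge1$, $C_n$ is the Hilbert calculus with Modus Ponens and axiom schemata: $\alpha\to(\beta\to\alpha)$; $(\alpha\to(\beta\to\gamma))\to((\alpha\to\beta)\to(\alpha\to\gamma))$; $\alpha\to(\beta\to(\alpha\wedge\beta))$; $(\alpha\wedge\beta)\to\alpha$; $(\alpha\wedge\beta)\to\beta$; $\alpha\to(\alpha\vee\beta)$; $\beta\to(\alpha\vee\beta)$; $(\alpha\to\gamma)\to((\beta\to\gamma)\to((\alpha\vee\beta)\to\gamma))$; $\alpha\vee\neg\alpha$; $\neg\neg\alpha\to\alpha$; (bc$_n$) $\alpha^{(n)}\to(\alpha\to(\neg\alpha\to\beta))$; (P$_n$) $(\alpha^{(n)}\wedge\beta^{(n)})\to((\alpha\wedge\beta)^{(n)}\wedge(\alpha\vee\beta)^{(n)}\wedge(\alpha\to\beta)^{(n)})$. $\mathcal{A}_{C_1}$ is the $\Sigma$-multialgebra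 with universe $\{F,t,T\}$, $D=\{t,T\}$, and: $F\tilde\vee F=\{F\}$, $F\tilde\vee T=T\tilde\vee F=T\tilde\vee T=\{T\}$, $x\tilde\vee y=D$ whenever $t\in\{x,y\}$; $x\tilde\wedge y=\{F\}$ if $F\in\{x,y\}$, $T\tilde\wedge T=\{T\}$, $t\tilde\wedge t=t\tilde\wedge T=T\tilde\wedge t=D$; $\tilde\neg F=\{T\}$, $\tilde\neg t=D$, $\tilde\neg T=\{F\}$; $F\tilde\to F=F\tilde\to T=T\tilde\to T=\{T\}$, $t\tilde\to F=T\tilde\to F=\{F\}$, $x\tilde\to t=D$ for all $x$, $t\tilde\to T=D$. A valuation is a map $\nu$ with $\nu(\neg\alpha)\in\tilde\neg\nu(\alpha)$ and $\nu(\alpha\#\beta)\in\nu(\alpha)\tilde\#\nu(\beta)$. $\mathcal{F}_{C_1}$ is the set of valuations with $\nu(\alpha)=t\Rightarrow\nu(\alpha\wedge\neg\alpha)=T$ for all $\alpha$. $\mathcal{RM}_{C_1}=(\mathcal{A}_{C_1},D,\mathcal{F}_{C_1})$; $\Gamma\vDash^{\mathsf{RN}}_{\mathcal{RM}_{C_1}}\varphi$ iff every $\nu\in\mathcal{F}_{C_1}$ with $\nu[\Gamma]\subseteq D$ has $\nu(\varphi)\in D$. *)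

theory Defs
  imports Main
begin

datatype fm =
    Var nat
  | Neg fm
  | Conj fm fm
  | Disj fm fm
  | Imp fm fm

fun circ :: "fm \<Rightarrow> nat \<Rightarrow> fm" where
  "circ a 0 = a"
| "circ a (Suc k) = Neg (Conj (circ a k) (Neg (circ a k)))"

text \<open>alpha^(1) = alpha^1, alpha^(k+1) = alpha^(k) and alpha^(k+1); we only use n >= 1.\<close>
fun wcirc :: "fm \<Rightarrow> nat \<Rightarrow> fm" where
  "wcirc a 0 = circ a 1"
| "wcirc a (Suc 0) = circ a 1"
| "wcirc a (Suc (Suc k)) = Conj (wcirc a (Suc k)) (circ a (Suc (Suc k)))"

inductive axiom_Cn :: "nat \<Rightarrow> fm \<Rightarrow> bool" for n :: nat where
  Ax1: "axiom_Cn n (Imp a (Imp b a))"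
| Ax2: "axiom_Cn n (Imp (Imp a (Imp b c)) (Imp (Imp a b) (Imp a c)))"
| Ax3: "axiom_Cn n (Imp a (Imp b (Conj a b)))"
| Ax4: "axiom_Cn n (Imp (Conj a b) a)"
| Ax5: "axiom_Cn n (Imp (Conj a b) b)"
| Ax6: "axiom_Cn n (Imp a (Disj a b))"
| Ax7: "axiom_Cn n (Imp b (Disj a b))"
| Ax8: "axiom_Cn n (Imp (Imp a c) (Imp (Imp b c) (Imp (Disj a b) c)))"
| Ax9: "axiom_Cn n (Disj a (Neg a))"
| Ax10: "axiom_Cn n (Imp (Neg (Neg a)) a)"
| bc: "axiom_Cn n (Imp (wcirc a n) (Imp a (Imp (Neg a) b)))"
| P: "axiom_Cn n (Imp (Conj (wcirc a n) (wcirc b n))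
        (Conj (Conj (wcirc (Conj a b) n) (wcirc (Disj a b) n)) (wcirc (Imp a b) n)))"

inductive derives_Cn :: "nat \<Rightarrow> fm set \<Rightarrow> fm \<Rightarrow> bool" for n :: nat and \<Gamma> :: "fm set" where
  Hyp: "a \<in> \<Gamma> \<Longrightarrow> derives_Cn n \<Gamma> a"
| Ax: "axiom_Cn n a \<Longrightarrow> derives_Cn n \<Gamma> a"
| MP: "derives_Cn n \<Gamma> a \<Longrightarrow> derives_Cn n \<Gamma> (Imp a b) \<Longrightarrow> derives_Cn n \<Gamma> b"

datatype tv = F | t | T

definition D :: "tv set" where "D = {t, T}"

definition mneg :: "tv \<Rightarrow> tv set" where
  "mneg x = (case x of F \<Rightarrow> {T} | t \<Rightarrow> D | T \<Rightarrow> {F})"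

definition mdisj :: "tv \<Rightarrow> tv \<Rightarrow> tv set" where
  "mdisj x y = (if x = t \<or> y = t then D
               else if x = F \<and> y = F then {F} else {T})"

definition mconj :: "tv \<Rightarrow> tv \<Rightarrow> tv set" where
  "mconj x y = (if x = F \<or> y = F then {F}
               else if x = T \<and> y = T then {T} else D)"

definition mimp :: "tv \<Rightarrow> tv \<Rightarrow> tv set" where
  "mimp x y = (if y = t then D
              else if y = F then (if x = F then {T} else {F})
              else (if x = t then D else {T}))"

definition valuation :: "(fm \<Rightarrow> tv) \<Rightarrow> bool" where
  "valuation v \<longleftrightarrow>
     (\<forall>a. v (Neg a) \<in> mneg (v a)) \<and>
     (\<forall>a b. v (Conj a b) \<in> mconj (v a) (v b)) \<and>
     (\<forall>a b. v (Disj a b) \<in> mdisj (v a) (v b)) \<and>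
     (\<forall>a b. v (Imp a b) \<in> mimp (v a) (v b))"

definition F_C1 :: "(fm \<Rightarrow> tv) set" where
  "F_C1 = {v. valuation v \<and> (\<forall>a. v a = t \<longrightarrow> v (Conj a (Neg a)) = T)}"

definition RN_conseq :: "fm set \<Rightarrow> fm \<Rightarrow> bool" where
  "RN_conseq \<Gamma> \<phi> \<longleftrightarrow> (\<forall>v \<in> F_C1. v ` \<Gamma> \<subseteq> D \<longrightarrow> v \<phi> \<in> D)"

end

theory Submission
  imports Defs
begin

abbreviation der :: "fm set \<Rightarrow> fm \<Rightarrow> bool" where "der \<equiv> derives_Cn 1"

lemma wc1: "wcirc a 1 = Neg (Conj a (Neg a))"
  by (simp add: One_nat_def)

lemma inD: "x \<in> D \<longleftrightarrow> x \<noteq> F"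
  by (cases x) (auto simp: D_def)

section \<open>Soundness\<close>

lemma vImp: "valuation v \<Longrightarrow> (v (Imp a b) \<noteq> F) = (v a = F \<or> v b \<noteq> F)"
proof -
  assume "valuation v"
  then have "v (Imp a b) \<in> mimp (v a) (v b)" by (simp add: valuation_def)
  then show ?thesis by (cases "v a"; cases "v b"; auto simp: mimp_def D_def)
qed

lemma vConj: "valuation v \<Longrightarrow> (v (Conj a b) \<noteq> F) = (v a \<noteq> F \<and> v b \<noteq> F)"
proof -
  assume "valuation v"
  then have "v (Conj a b) \<in> mconj (v a) (v b)" by (simp add: valuation_def)
  then show ?thesis by (cases "v a"; cases "v b"; auto simp: mconj_def D_def)
qed

lemma vDisj: "valuation v \<Longrightarrow> (v (Disj a b) \<noteq> F) = (v a \<noteq> F \<or> v b \<noteq> F)"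
proof -
  assume "valuation v"
  then have "v (Disj a b) \<in> mdisj (v a) (v b)" by (simp add: valuation_def)
  then show ?thesis by (cases "v a"; cases "v b"; auto simp: mdisj_def D_def)
qed

lemma vNeg: "valuation v \<Longrightarrow> (v a = F \<longrightarrow> v (Neg a) = T) \<and> (v a = T \<longrightarrow> v (Neg a) = F)
   \<and> (v a = t \<longrightarrow> v (Neg a) \<noteq> F)"
proof -
  assume "valuation v"
  then have "v (Neg a) \<in> mneg (v a)" by (simp add: valuation_def)
  then show ?thesis by (cases "v a"; auto simp: mneg_def D_def)
qed

lemma vnt: "valuation v \<Longrightarrow> v a \<noteq> t \<Longrightarrow> v b \<noteq> t \<Longrightarrow>
   v (Conj a b) \<noteq> t \<and> v (Disj a b) \<noteq> t \<and> v (Imp a b) \<noteq> t"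
proof -
  assume v: "valuation v" "v a \<noteq> t" "v b \<noteq> t"
  then have "v (Conj a b) \<in> mconj (v a) (v b)" "v (Disj a b) \<in> mdisj (v a) (v b)"
    "v (Imp a b) \<in> mimp (v a) (v b)" by (simp_all add: valuation_def)
  with v show ?thesis
    by (cases "v a"; cases "v b"; auto simp: mconj_def mdisj_def mimp_def D_def)
qed

lemma vcirc: "v \<in> F_C1 \<Longrightarrow> v (Neg (Conj a (Neg a))) = (if v a = t then F else T)"
proof -
  assume v: "v \<in> F_C1"
  then have val: "valuation v" and r: "v a = t \<Longrightarrow> v (Conj a (Neg a)) = T"
    by (auto simp: F_C1_def)
  have "v (Conj a (Neg a)) \<in> mconj (v a) (v (Neg a))" using val by (simp add: valuation_def)
  moreover have "v (Neg a) \<in> mneg (v a)" using val by (simp add: valuation_def)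
  moreover have "v (Neg (Conj a (Neg a))) \<in> mneg (v (Conj a (Neg a)))"
    using val by (simp add: valuation_def)
  ultimately show ?thesis using r
    by (cases "v a"; cases "v (Neg a)"; auto simp: mconj_def mneg_def D_def)
qed

lemma ax_sound: "axiom_Cn 1 a \<Longrightarrow> v \<in> F_C1 \<Longrightarrow> v a \<noteq> F"
proof (induction rule: axiom_Cn.induct)
  case (bc a b)
  then have val: "valuation v" by (simp add: F_C1_def)
  have "v (Neg (Conj a (Neg a))) = (if v a = t then F else T)" by (rule vcirc[OF bc])
  then show ?case using vNeg[OF val, of a]
    by (cases "v a") (auto simp: wc1 vImp[OF val])
next
  case (P a b)
  then have val: "valuation v" by (simp add: F_C1_def)
  have vc: "v (Neg (Conj x (Neg x))) = (if v x = t then F else T)" for x by (rule vcirc[OF P])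
  have cf: "(v (Conj x y) = F) = (v x = F \<or> v y = F)" for x y using vConj[OF val, of x y] by blast
  show ?case using vnt[OF val, of a b] vc
    by (auto simp: wc1 vImp[OF val] cf)
next
  case (Ax9 a)
  then have val: "valuation v" by (simp add: F_C1_def)
  then show ?case using vNeg[OF val, of a] by (auto simp: vDisj[OF val])
next
  case (Ax10 a)
  then have val: "valuation v" by (simp add: F_C1_def)
  then show ?case using vNeg[OF val, of a] vNeg[OF val, of "Neg a"]
    by (cases "v a") (auto simp: vImp[OF val])
qed (auto simp: F_C1_def vImp vConj vDisj)

lemma sound: "der \<Gamma> \<phi> \<Longrightarrow> v \<in> F_C1 \<Longrightarrow> v ` \<Gamma> \<subseteq> D \<Longrightarrow> v \<phi> \<in> D"
proof (induction rule: derives_Cn.induct)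
  case (Hyp a) then show ?case by auto
next
  case (Ax a) then show ?case using ax_sound by (simp add: inD)
next
  case (MP a b) then show ?case by (auto simp: inD F_C1_def vImp)
qed

lemma der_mono: "derives_Cn n \<Gamma> a \<Longrightarrow> \<Gamma> \<subseteq> \<Gamma>' \<Longrightarrow> derives_Cn n \<Gamma>' a"
  by (induction rule: derives_Cn.induct) (auto intro: derives_Cn.intros)

lemma der_id: "derives_Cn n \<Gamma> (Imp a a)"
proof -
  have 1: "derives_Cn n \<Gamma> (Imp (Imp a (Imp (Imp a a) a)) (Imp (Imp a (Imp a a)) (Imp a a)))"
    by (rule derives_Cn.Ax, rule Ax2)
  have 2: "derives_Cn n \<Gamma> (Imp a (Imp (Imp a a) a))" by (rule derives_Cn.Ax, rule Ax1)
  have 3: "derives_Cn n \<Gamma> (Imp a (Imp a a))" by (rule derives_Cn.Ax, rule Ax1)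
  show ?thesis by (rule derives_Cn.MP[OF 3 derives_Cn.MP[OF 2 1]])
qed

lemma DT: "derives_Cn n (insert a \<Gamma>) b \<Longrightarrow> derives_Cn n \<Gamma> (Imp a b)"
proof (induction rule: derives_Cn.induct)
  case (Hyp c)
  then show ?case
  proof
    assume "c = a" then show ?thesis using der_id by simp
  next
    assume "c \<in> \<Gamma>"
    then show ?thesis
      by (meson Ax1 derives_Cn.Ax derives_Cn.Hyp derives_Cn.MP)
  qed
next
  case (Ax c) then show ?case by (meson Ax1 derives_Cn.Ax derives_Cn.MP)
next
  case (MP c d)
  then show ?case by (meson Ax2 derives_Cn.Ax derives_Cn.MP)
qed

lemma der_ax: "axiom_Cn n a \<Longrightarrow> derives_Cn n \<Gamma> a" by (rule derives_Cn.Ax)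

lemma disjE_der:
  assumes "derives_Cn n \<Gamma> (Disj a b)" "derives_Cn n (insert a \<Gamma>) c" "derives_Cn n (insert b \<Gamma>) c"
  shows "derives_Cn n \<Gamma> c"
proof -
  have "derives_Cn n \<Gamma> (Imp (Imp a c) (Imp (Imp b c) (Imp (Disj a b) c)))" by (rule der_ax, rule Ax8)
  then show ?thesis using assms DT derives_Cn.MP by metis
qed

lemma finite_der: "derives_Cn n \<Gamma> a \<Longrightarrow> \<exists>\<Gamma>'. finite \<Gamma>' \<and> \<Gamma>' \<subseteq> \<Gamma> \<and> derives_Cn n \<Gamma>' a"
proof (induction rule: derives_Cn.induct)
  case (Hyp a) then show ?case by (intro exI[of _ "{a}"]) (auto intro: derives_Cn.Hyp)
next
  case (Ax a) then show ?case by (intro exI[of _ "{}"]) (auto intro: derives_Cn.Ax)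
next
  case (MP a b)
  then obtain G1 G2 where "finite G1" "G1 \<subseteq> \<Gamma>" "derives_Cn n G1 a"
     "finite G2" "G2 \<subseteq> \<Gamma>" "derives_Cn n G2 (Imp a b)" by blast
  then show ?case
    by (intro exI[of _ "G1 \<union> G2"]) (auto intro: derives_Cn.MP der_mono)
qed

lemma peirce_disj: "der \<Gamma> (Disj a (Imp a b))"
proof -
  have ax6: "der G (Disj a (Imp a b))" if "a \<in> G" for G
    using that by (meson Ax6 derives_Cn.Ax derives_Cn.Hyp derives_Cn.MP)
  have ax7: "der G (Disj a (Imp a b))" if "der G (Imp a b)" for G
    using that by (meson Ax7 derives_Cn.Ax derives_Cn.MP)
  show ?thesis
  proof (rule disjE_der[where a=a and b="Neg a"])
    show "der \<Gamma> (Disj a (Neg a))" by (rule der_ax, rule Ax9)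
    show "der (insert a \<Gamma>) (Disj a (Imp a b))" by (rule ax6) simp
    show "der (insert (Neg a) \<Gamma>) (Disj a (Imp a b))"
    proof (rule disjE_der[where a="Conj a (Neg a)" and b="Neg (Conj a (Neg a))"])
      show "der (insert (Neg a) \<Gamma>) (Disj (Conj a (Neg a)) (Neg (Conj a (Neg a))))"
        by (rule der_ax, rule Ax9)
      let ?G = "insert (Conj a (Neg a)) (insert (Neg a) \<Gamma>)"
      have "der ?G a"
        by (meson Ax4 derives_Cn.Ax derives_Cn.Hyp derives_Cn.MP insertI1)
      then show "der ?G (Disj a (Imp a b))"
        by (meson Ax6 derives_Cn.Ax derives_Cn.MP)
      let ?H = "insert (Neg (Conj a (Neg a))) (insert (Neg a) \<Gamma>)"
      have bc1: "der (insert a ?H) (Imp (wcirc a 1) (Imp a (Imp (Neg a) b)))"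
        by (rule der_ax, rule bc)
      have "der (insert a ?H) b"
        by (rule derives_Cn.MP[where a="Neg a"], blast intro: derives_Cn.Hyp,
            rule derives_Cn.MP[where a=a], blast intro: derives_Cn.Hyp,
            rule derives_Cn.MP[OF _ bc1], simp add: wc1 derives_Cn.Hyp)
      then show "der ?H (Disj a (Imp a b))" by (intro ax7 DT)
    qed
  qed
qed

section \<open>Maximal sets\<close>

locale maxset =
  fixes \<Delta> :: "fm set" and \<phi> :: fm
  assumes nd: "\<not> der \<Delta> \<phi>"
    and mx: "\<And>\<psi>. \<psi> \<notin> \<Delta> \<Longrightarrow> der (insert \<psi> \<Delta>) \<phi>"
begin

lemma closed: "der \<Delta> \<psi> \<Longrightarrow> \<psi> \<in> \<Delta>"
proof (rule ccontr)
  assume "der \<Delta> \<psi>" "\<psi> \<notin> \<Delta>"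
  then have "der \<Delta> (Imp \<psi> \<phi>)" using mx DT by blast
  then have "der \<Delta> \<phi>" using \<open>der \<Delta> \<psi>\<close> derives_Cn.MP by blast
  then show False using nd by simp
qed

lemma hyp: "\<psi> \<in> \<Delta> \<Longrightarrow> der \<Delta> \<psi>" by (rule derives_Cn.Hyp)

lemma mp: "a \<in> \<Delta> \<Longrightarrow> Imp a b \<in> \<Delta> \<Longrightarrow> b \<in> \<Delta>"
  by (rule closed, rule derives_Cn.MP[OF hyp hyp])

lemma axm: "axiom_Cn 1 a \<Longrightarrow> a \<in> \<Delta>"
  by (rule closed, rule der_ax)

lemma conj_iff: "Conj a b \<in> \<Delta> \<longleftrightarrow> a \<in> \<Delta> \<and> b \<in> \<Delta>"
proof
  assume h: "Conj a b \<in> \<Delta>"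
  show "a \<in> \<Delta> \<and> b \<in> \<Delta>"
  proof
    show "a \<in> \<Delta>" by (rule mp[OF h axm[OF Ax4]])
    show "b \<in> \<Delta>" by (rule mp[OF h axm[OF Ax5]])
  qed
next
  assume h: "a \<in> \<Delta> \<and> b \<in> \<Delta>"
  show "Conj a b \<in> \<Delta>"
    by (rule mp[OF conjunct2[OF h] mp[OF conjunct1[OF h] axm[OF Ax3]]])
qed

lemma disj_iff: "Disj a b \<in> \<Delta> \<longleftrightarrow> a \<in> \<Delta> \<or> b \<in> \<Delta>"
proof
  assume d: "Disj a b \<in> \<Delta>"
  show "a \<in> \<Delta> \<or> b \<in> \<Delta>"
  proof (rule ccontr)
    assume "\<not> (a \<in> \<Delta> \<or> b \<in> \<Delta>)"
    then have "der (insert a \<Delta>) \<phi>" "der (insert b \<Delta>) \<phi>" using mx by auto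
    then have "der \<Delta> \<phi>" by (rule disjE_der[OF hyp[OF d]])
    then show False using nd by simp
  qed
next
  assume "a \<in> \<Delta> \<or> b \<in> \<Delta>"
  then show "Disj a b \<in> \<Delta>"
  proof
    assume "a \<in> \<Delta>" then show ?thesis by (rule mp[OF _ axm[OF Ax6]])
  next
    assume "b \<in> \<Delta>" then show ?thesis by (rule mp[OF _ axm[OF Ax7]])
  qed
qed

lemma imp_iff: "Imp a b \<in> \<Delta> \<longleftrightarrow> a \<notin> \<Delta> \<or> b \<in> \<Delta>"
proof
  assume "Imp a b \<in> \<Delta>"
  then show "a \<notin> \<Delta> \<or> b \<in> \<Delta>" using mp[of a b] by blast
next
  have pd: "Disj a (Imp a b) \<in> \<Delta>" by (rule closed, rule peirce_disj)
  assume "a \<notin> \<Delta> \<or> b \<in> \<Delta>"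
  then show "Imp a b \<in> \<Delta>"
  proof
    assume "a \<notin> \<Delta>" then show ?thesis using pd disj_iff by blast
  next
    assume "b \<in> \<Delta>" then show ?thesis by (rule mp[OF _ axm[OF Ax1]])
  qed
qed

lemma neg1: "a \<notin> \<Delta> \<Longrightarrow> Neg a \<in> \<Delta>"
proof -
  assume "a \<notin> \<Delta>"
  moreover have "Disj a (Neg a) \<in> \<Delta>" by (rule axm, rule Ax9)
  ultimately show ?thesis unfolding disj_iff by blast
qed

lemma neg2: "Neg (Neg a) \<in> \<Delta> \<Longrightarrow> a \<in> \<Delta>"
  by (rule mp[OF _ axm[OF Ax10]])

lemma bc1: "Neg (Conj a (Neg a)) \<in> \<Delta> \<Longrightarrow> a \<in> \<Delta> \<Longrightarrow> Neg a \<notin> \<Delta>"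
proof
  assume "Neg (Conj a (Neg a)) \<in> \<Delta>" "a \<in> \<Delta>" "Neg a \<in> \<Delta>"
  moreover have "Imp (wcirc a 1) (Imp a (Imp (Neg a) \<phi>)) \<in> \<Delta>" by (rule axm, rule bc)
  ultimately have "\<phi> \<in> \<Delta>" unfolding wc1 by (meson mp)
  then show False using nd hyp by blast
qed

lemma P1: "Neg (Conj a (Neg a)) \<in> \<Delta> \<Longrightarrow> Neg (Conj b (Neg b)) \<in> \<Delta> \<Longrightarrow>
  Neg (Conj (Conj a b) (Neg (Conj a b))) \<in> \<Delta> \<and> Neg (Conj (Disj a b) (Neg (Disj a b))) \<in> \<Delta>
  \<and> Neg (Conj (Imp a b) (Neg (Imp a b))) \<in> \<Delta>"
proof -
  assume "Neg (Conj a (Neg a)) \<in> \<Delta>" "Neg (Conj b (Neg b)) \<in> \<Delta>"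
  moreover have "Imp (Conj (wcirc a 1) (wcirc b 1))
        (Conj (Conj (wcirc (Conj a b) 1) (wcirc (Disj a b) 1)) (wcirc (Imp a b) 1)) \<in> \<Delta>"
    by (rule axm, rule P)
  moreover have "Conj (wcirc a 1) (wcirc b 1) \<in> \<Delta>"
    using calculation(1,2) conj_iff by (simp add: wc1)
  ultimately have "Conj (Conj (wcirc (Conj a b) 1) (wcirc (Disj a b) 1)) (wcirc (Imp a b) 1) \<in> \<Delta>"
    by (meson mp)
  then show ?thesis unfolding conj_iff wc1 by blast
qed

definition val :: "fm \<Rightarrow> tv" where
  "val a = (if a \<notin> \<Delta> then F else if Neg a \<in> \<Delta> then t else T)"

lemma circ_in: "val a \<noteq> t \<Longrightarrow> Neg (Conj a (Neg a)) \<in> \<Delta>"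
  using neg1 conj_iff unfolding val_def by (auto split: if_splits)

lemma valF: "val a = F \<longleftrightarrow> a \<notin> \<Delta>" by (simp add: val_def)
lemma valt: "val a = t \<longleftrightarrow> a \<in> \<Delta> \<and> Neg a \<in> \<Delta>" by (simp add: val_def)
lemma valT: "val a = T \<longleftrightarrow> a \<in> \<Delta> \<and> Neg a \<notin> \<Delta>" by (simp add: val_def)

lemma nt_nneg: "val a \<noteq> t \<Longrightarrow> val b \<noteq> t \<Longrightarrow>
   (Conj a b \<in> \<Delta> \<longrightarrow> Neg (Conj a b) \<notin> \<Delta>) \<and> (Disj a b \<in> \<Delta> \<longrightarrow> Neg (Disj a b) \<notin> \<Delta>)
   \<and> (Imp a b \<in> \<Delta> \<longrightarrow> Neg (Imp a b) \<notin> \<Delta>)"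
proof -
  assume "val a \<noteq> t" "val b \<noteq> t"
  then have "Neg (Conj a (Neg a)) \<in> \<Delta>" "Neg (Conj b (Neg b)) \<in> \<Delta>" by (simp_all add: circ_in)
  from P1[OF this] have
    "Neg (Conj (Conj a b) (Neg (Conj a b))) \<in> \<Delta>" "Neg (Conj (Disj a b) (Neg (Disj a b))) \<in> \<Delta>"
    "Neg (Conj (Imp a b) (Neg (Imp a b))) \<in> \<Delta>" by blast+
  then show ?thesis using bc1 by blast
qed

lemma val_valuation: "val \<in> F_C1"
proof -
  have n: "val (Neg a) \<in> mneg (val a)" for a
  proof (cases "val a")
    case F then have na: "a \<notin> \<Delta>" by (simp add: valF)
    then have "Neg a \<in> \<Delta>" "Neg (Neg a) \<notin> \<Delta>" using neg1[OF na] neg2[of a] by blast+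
    then show ?thesis using F by (simp add: val_def mneg_def)
  next
    case t then have "Neg a \<in> \<Delta>" by (simp add: valt)
    then show ?thesis using t by (simp add: val_def mneg_def D_def)
  next
    case T then have "Neg a \<notin> \<Delta>" by (simp add: valT)
    then show ?thesis using T by (simp add: val_def mneg_def)
  qed
  have c: "val (Conj a b) \<in> mconj (val a) (val b)" for a b
  proof (cases "val a = F \<or> val b = F")
    case True
    then have "Conj a b \<notin> \<Delta>" by (auto simp: valF conj_iff)
    then show ?thesis using True by (auto simp: mconj_def val_def)
  next
    case False
    then have in1: "Conj a b \<in> \<Delta>" by (auto simp: valF conj_iff)
    show ?thesis
    proof (cases "val a = T \<and> val b = T")
      case True
      then have "Neg (Conj a b) \<notin> \<Delta>" using nt_nneg[of a b] in1 by auto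
      then show ?thesis using True in1 by (simp add: mconj_def val_def)
    next
      case False2: False
      then show ?thesis using False in1 by (auto simp: mconj_def val_def D_def)
    qed
  qed
  have d: "val (Disj a b) \<in> mdisj (val a) (val b)" for a b
  proof (cases "val a = F \<and> val b = F")
    case True
    then have "Disj a b \<notin> \<Delta>" by (auto simp: valF disj_iff)
    then show ?thesis using True by (auto simp: mdisj_def val_def)
  next
    case False
    then have in1: "Disj a b \<in> \<Delta>" by (auto simp: valF disj_iff)
    show ?thesis
    proof (cases "val a = t \<or> val b = t")
      case False2: False
      then have "Neg (Disj a b) \<notin> \<Delta>" using nt_nneg[of a b] in1 by auto
      then show ?thesis using False False2 in1 by (simp add: mdisj_def val_def)
    next
      case True
      then show ?thesis using in1 by (auto simp: mdisj_def val_def D_def)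
    qed
  qed
  have i: "val (Imp a b) \<in> mimp (val a) (val b)" for a b
  proof (cases "val a \<noteq> F \<and> val b = F")
    case True
    then have "Imp a b \<notin> \<Delta>" by (auto simp: valF imp_iff)
    then show ?thesis using True by (auto simp: mimp_def val_def)
  next
    case False
    then have in1: "Imp a b \<in> \<Delta>" by (auto simp: valF imp_iff)
    show ?thesis
    proof (cases "val a = t \<or> val b = t")
      case False2: False
      then have "Neg (Imp a b) \<notin> \<Delta>" using nt_nneg[of a b] in1 by auto
      then show ?thesis using False False2 in1 by (auto simp: mimp_def val_def split: if_splits)
    next
      case True
      then show ?thesis using in1 False by (auto simp: mimp_def val_def D_def split: if_splits)
    qed
  qed
  have r: "val a = t \<Longrightarrow> val (Conj a (Neg a)) = T" for a
  proof -
    assume "val a = t"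
    then have "a \<in> \<Delta>" "Neg a \<in> \<Delta>" by (simp_all add: valt)
    then have "Conj a (Neg a) \<in> \<Delta>" "Neg (Conj a (Neg a)) \<notin> \<Delta>"
      using conj_iff bc1 by blast+
    then show ?thesis by (simp add: val_def)
  qed
  show ?thesis unfolding F_C1_def valuation_def using n c d i r by blast
qed

end

lemma lindenbaum:
  assumes "\<not> der \<Gamma> \<phi>"
  shows "\<exists>\<Delta>. \<Gamma> \<subseteq> \<Delta> \<and> maxset \<Delta> \<phi>"
proof -
  define A where "A = {\<Delta>. \<Gamma> \<subseteq> \<Delta> \<and> \<not> der \<Delta> \<phi>}"
  have "\<forall>C\<in>chains A. \<exists>U\<in>A. \<forall>X\<in>C. X \<subseteq> U"
  proof
    fix C assume C: "C \<in> chains A"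
    show "\<exists>U\<in>A. \<forall>X\<in>C. X \<subseteq> U"
    proof (cases "C = {}")
      case True
      have "\<Gamma> \<in> A" using assms by (simp add: A_def)
      then show ?thesis using True by blast
    next
      case False
      have "\<Union>C \<in> A"
      proof -
        obtain X where "X \<in> C" using False by blast
        moreover have "C \<subseteq> A" using C by (simp add: chains_def)
        ultimately have "\<Gamma> \<subseteq> \<Union>C" unfolding A_def by blast
        moreover have "\<not> der (\<Union>C) \<phi>"
        proof
          assume "der (\<Union>C) \<phi>"
          from finite_der[OF this] obtain G where G: "finite G" "G \<subseteq> \<Union>C" "der G \<phi>" by blast
          have "subset.chain A C" using C by (simp add: chains_alt_def)
          then obtain B where "B \<in> C" "G \<subseteq> B"
            using finite_subset_Union_chain[OF G(1) G(2) False] by blast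
          then have "der B \<phi>" using der_mono[OF G(3)] by blast
          moreover have "B \<in> A" using \<open>B \<in> C\<close> \<open>C \<subseteq> A\<close> by blast
          ultimately show False by (simp add: A_def)
        qed
        ultimately show ?thesis by (simp add: A_def)
      qed
      then show ?thesis by blast
    qed
  qed
  from Zorn_Lemma2[OF this] obtain M where M: "M \<in> A" "\<forall>X\<in>A. M \<subseteq> X \<longrightarrow> X = M" by blast
  have "maxset M \<phi>"
  proof
    show "\<not> der M \<phi>" using M by (simp add: A_def)
    fix \<psi> assume "\<psi> \<notin> M"
    have "insert \<psi> M \<noteq> M" using \<open>\<psi> \<notin> M\<close> by blast
    then have "insert \<psi> M \<notin> A" using M(2) by blast
    moreover have "\<Gamma> \<subseteq> insert \<psi> M" using M(1) by (auto simp: A_def)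
    ultimately show "der (insert \<psi> M) \<phi>" by (simp add: A_def)
  qed
  moreover have "\<Gamma> \<subseteq> M" using M(1) by (simp add: A_def)
  ultimately show ?thesis by blast
qed

theorem mainTheorem9:
  fixes \<Gamma> :: "fm set" and \<phi> :: fm
  shows "derives_Cn 1 \<Gamma> \<phi> \<longleftrightarrow> RN_conseq \<Gamma> \<phi>"
proof
  assume "derives_Cn 1 \<Gamma> \<phi>"
  then show "RN_conseq \<Gamma> \<phi>" using sound by (auto simp: RN_conseq_def)
next
  assume r: "RN_conseq \<Gamma> \<phi>"
  show "derives_Cn 1 \<Gamma> \<phi>"
  proof (rule ccontr)
    assume "\<not> derives_Cn 1 \<Gamma> \<phi>"
    then obtain \<Delta> where "\<Gamma> \<subseteq> \<Delta>" and m: "maxset \<Delta> \<phi>" using lindenbaum by blast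
    have "maxset.val \<Delta> ` \<Gamma> \<subseteq> D" using \<open>\<Gamma> \<subseteq> \<Delta>\<close>
      by (auto simp: maxset.val_def[OF m] inD)
    moreover have "maxset.val \<Delta> \<phi> \<notin> D"
      using maxset.nd[OF m] maxset.hyp[OF m] by (auto simp: maxset.val_def[OF m] inD)
    ultimately show False using r maxset.val_valuation[OF m] by (auto simp: RN_conseq_def)
  qed
qed

end
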